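(* Consider the robust matrix completion iteration described in the context (instantiated with $l_{g,c}$ being any of the HOW, HOC or HOP functions). Then the real sequence $\big\{\mathcal{L}_{g,c^k}(\mathbf U^k,\mathbf V^k,\mathbf S^k)\big\}_{k\ge1}$ converges.
   Context: Data: a matrix $\mathbf X\in\mathbb{R}^{m\times n}$, an index set $\Omega\subset\{1,\dots,m\}\times\{1,\dots,n\}$ of observed entries, a target rank $r\ll\min(m,n)$. For a matrix $\mathbf A$, $\mathbf A_\Omega$ keeps the entries with indices in $\Omega$ and sets the others to $0$. Loss functions: for $c>0$ and a continuous, nondecreasing, differentiable function $g$ on $(0,\infty)$ with $g'(c)>0$, set $a=c/g'(c)$, $b=c^2/2-a\,g(c)$ and $l_{g,c}(x)=x^2/2$ if $|x|\le c$, $l_{g,c}(x)=a\,g(|x|)+b$ if $|x|>c$. The three instances are: HOW ($g(x)=\frac{\sigma^2}{2}(1-e^{-x^2/\sigma^2})$, $\sigma>0$), HOC ($g(x)=\frac{\gamma^2}{2}\ln(1+x^2/\gamma^2)$, $\gamma>0$), HOP ($g(x)=|x|^p$, $0<p\le1$). In each case $x\mapsto x^2/2-l_{g,c}(x)$ is convex and differentiable. Define $\varphi_{g,c}(y)=\sup_{t}[l_{g,c}(t)-(t-y)^2/2]$ and $P_{\varphi_{g,c}}(x)=\max\{0,|x|-a\,g'(|x|)\}\operatorname{sign}(x)$ (value $0$ at $x=0$), the minimizer of $y\mapsto (x-y)^2/2+\varphi_{g,c}(y)$. For matrices, $l_{g,c}$, $\varphi_{g,c}$ are summed entrywise and $P_{\varphi_{g,c}}$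 acts entrywise. Objective: $\mathcal{L}_{g,c}(\mathbf U,\mathbf V,\mathbf S)=\tfrac12\|\mathbf X_\Omega-(\mathbf U\mathbf V)_\Omega-\mathbf S_\Omega\|_F^2+\sum_{(i,j)\in\Omega}\varphi_{g,c}(S_{ij})$ for $\mathbf U\in\mathbb{R}^{m\times r}$, $\mathbf V\in\mathbb{R}^{r\times n}$, $\mathbf S\in\mathbb{R}^{m\times n}$ with $\mathbf S_{\Omega^c}=\mathbf 0$. Iteration (given initial $\mathbf U^0,\mathbf V^0$, a constant $\xi>0$, and $c^{-1}=+\infty$): for $k=0,1,2,\dots$: (i) $\mathbf D^k=\mathbf X-\mathbf U^k\mathbf V^k$; $d^k=\mathrm{IQR}(\mathrm{vec}(\mathbf D^k_\Omega))/1.349$ where IQR is the sample interquartile range of the entries indexed by $\Omega$; $c^k=\min\{\xi d^k,c^{k-1}\}$. (ii) $\mathbf S^{k+1}_\Omega=P_{\varphi_{g,c^k}}(\mathbf D^k_\Omega)$, $\mathbf S^{k+1}_{\Omega^c}=\mathbf 0$; $\mathbf H=\mathbf X_\Omega-\mathbf S^{k+1}_\Omega$. (iii) With $h(\mathbf U,\mathbf V)=\tfrac12\|\mathbf H_\Omega-(\mathbf U\mathbf V)_\Omega\|_F^2$, $\nabla_{\mathbf U}h=-(\mathbf H_\Omega-(\mathbf U\mathbf V)_\Omega)\mathbf V^T$, $\nabla_{\mathbf V}h=-\mathbf U^T(\mathbf H_\Omega-(\mathbf U\mathbf V)_\Omega)$: set $\widetilde\nabla_{\mathbf U}=\nabla_{\mathbf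 U}h(\mathbf U^k,\mathbf V^k)(\mathbf V^k\mathbf V^{kT})^{-1}$, $\mu_{\mathbf U}=\langle\nabla_{\mathbf U}h,\widetilde\nabla_{\mathbf U}\rangle/\|(\widetilde\nabla_{\mathbf U}\mathbf V^k)_\Omega\|_F^2$, $\mathbf U^{k+1}=\mathbf U^k-\mu_{\mathbf U}\widetilde\nabla_{\mathbf U}$; then $\widetilde\nabla_{\mathbf V}=(\mathbf U^{k+1T}\mathbf U^{k+1})^{-1}\nabla_{\mathbf V}h(\mathbf U^{k+1},\mathbf V^k)$, $\mu_{\mathbf V}=\langle\nabla_{\mathbf V}h,\widetilde\nabla_{\mathbf V}\rangle/\|(\mathbf U^{k+1}\widetilde\nabla_{\mathbf V})_\Omega\|_F^2$, $\mathbf V^{k+1}=\mathbf V^k-\mu_{\mathbf V}\widetilde\nabla_{\mathbf V}$ (scaled alternating steepest descent). *)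

theory Defs
  imports "HOL-Analysis.Analysis" "HOL-Library.Multiset"
begin

definition g_how :: "real \<Rightarrow> real \<Rightarrow> real" where
  "g_how \<sigma> x = \<sigma>^2 / 2 * (1 - exp (- (x^2) / \<sigma>^2))"

definition g_hoc :: "real \<Rightarrow> real \<Rightarrow> real" where
  "g_hoc \<gamma> x = \<gamma>^2 / 2 * ln (1 + x^2 / \<gamma>^2)"

definition g_hop :: "real \<Rightarrow> real \<Rightarrow> real" where
  "g_hop p x = \<bar>x\<bar> powr p"

definition a_par :: "(real \<Rightarrow> real) \<Rightarrow> real \<Rightarrow> real" where
  "a_par g c = c / deriv g c"

definition b_par :: "(real \<Rightarrow> real) \<Rightarrow> real \<Rightarrow> real" where
  "b_par g c = c^2 / 2 - a_par g c * g c"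

definition l_gc :: "(real \<Rightarrow> real) \<Rightarrow> real \<Rightarrow> real \<Rightarrow> real" where
  "l_gc g c x = (if \<bar>x\<bar> \<le> c then x^2 / 2 else a_par g c * g \<bar>x\<bar> + b_par g c)"

definition phi_gc :: "(real \<Rightarrow> real) \<Rightarrow> real \<Rightarrow> real \<Rightarrow> real" where
  "phi_gc g c y = (SUP t. l_gc g c t - (t - y)^2 / 2)"

definition prox_gc :: "(real \<Rightarrow> real) \<Rightarrow> real \<Rightarrow> real \<Rightarrow> real" where
  "prox_gc g c x = (if x = 0 then 0 else max 0 (\<bar>x\<bar> - a_par g c * deriv g \<bar>x\<bar>) * sgn x)"

definition maskO :: "('m \<times> 'n) set \<Rightarrow> real^'n^'m \<Rightarrow> real^'n^'m" where
  "maskO \<Omega> A = (\<chi> i j. if (i, j) \<in> \<Omega> then A $ i $ j else 0)"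

definition loss_L :: "(real \<Rightarrow> real) \<Rightarrow> real \<Rightarrow> real^'n^'m \<Rightarrow> ('m::finite \<times> 'n::finite) set
    \<Rightarrow> real^'r^'m \<Rightarrow> real^'n^'r \<Rightarrow> real^'n^'m \<Rightarrow> real" where
  "loss_L g c X \<Omega> U V S =
     (norm (maskO \<Omega> X - maskO \<Omega> (U ** V) - maskO \<Omega> S))^2 / 2
     + (\<Sum>(i, j)\<in>\<Omega>. phi_gc g c (S $ i $ j))"

text \<open>Sample quantile of a sorted list (linear interpolation, "type 7" convention,
  0-indexed: h = (N-1) q).\<close>
definition quantile7 :: "real list \<Rightarrow> real \<Rightarrow> real" where
  "quantile7 xs q = (let h = (real (length xs) - 1) * q; lo = nat \<lfloor>h\<rfloor> in
      xs ! lo + (h - real lo) * (xs ! (lo + 1) - xs ! lo))"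

definition sample_iqr :: "real multiset \<Rightarrow> real" where
  "sample_iqr M = (let xs = sorted_list_of_multiset M in quantile7 xs (3/4) - quantile7 xs (1/4))"

definition entries_on :: "('m \<times> 'n) set \<Rightarrow> real^'n^'m \<Rightarrow> real multiset" where
  "entries_on \<Omega> D = image_mset (\<lambda>(i, j). D $ i $ j) (mset_set \<Omega>)"

definition d_scale :: "('m \<times> 'n) set \<Rightarrow> real^'n^'m \<Rightarrow> real" where
  "d_scale \<Omega> D = sample_iqr (entries_on \<Omega> D) / 1.349"

text \<open>One scaled alternating steepest descent step on h(U,V) = 1/2 ||H_\<Omega> - (UV)_\<Omega>||_F^2.\<close>
definition sasd_U :: "('m::finite \<times> 'n::finite) set \<Rightarrow> real^'n^'m \<Rightarrow> real^'r::finite^'m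
    \<Rightarrow> real^'n^'r \<Rightarrow> real^'r^'m" where
  "sasd_U \<Omega> H U V =
    (let G = - ((maskO \<Omega> H - maskO \<Omega> (U ** V)) ** transpose V);
         T = G ** matrix_inv (V ** transpose V);
         \<mu> = (G \<bullet> T) / (norm (maskO \<Omega> (T ** V)))^2
     in U - \<mu> *\<^sub>R T)"

definition sasd_V :: "('m::finite \<times> 'n::finite) set \<Rightarrow> real^'n^'m \<Rightarrow> real^'r::finite^'m
    \<Rightarrow> real^'n^'r \<Rightarrow> real^'n^'r" where
  "sasd_V \<Omega> H U V =
    (let G = - (transpose U ** (maskO \<Omega> H - maskO \<Omega> (U ** V)));
         T = matrix_inv (transpose U ** U) ** G;
         \<mu> = (G \<bullet> T) / (norm (maskO \<Omega> (U ** T)))^2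
     in V - \<mu> *\<^sub>R T)"

text \<open>rmc_iter ... k = (U^k, V^k, S^k, c^{k-1}) for k \<ge> 1; for k = 0 the last two
  components are placeholders (S^0 unused, c^{-1} = +\<infinity> handled by the case k = 0).\<close>
primrec rmc_iter :: "(real \<Rightarrow> real) \<Rightarrow> real \<Rightarrow> real^'n^'m \<Rightarrow> ('m::finite \<times> 'n::finite) set
    \<Rightarrow> real^'r::finite^'m \<Rightarrow> real^'n^'r \<Rightarrow> nat
    \<Rightarrow> (real^'r^'m) \<times> (real^'n^'r) \<times> (real^'n^'m) \<times> real" where
  "rmc_iter g \<xi> X \<Omega> U0 V0 0 = (U0, V0, 0, 0)"
| "rmc_iter g \<xi> X \<Omega> U0 V0 (Suc k) =
    (case rmc_iter g \<xi> X \<Omega> U0 V0 k of (U, V, S, cprev) \<Rightarrow>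
      (let D = X - U ** V;
           d = d_scale \<Omega> D;
           c = (if k = 0 then \<xi> * d else min (\<xi> * d) cprev);
           S' = (\<chi> i j. if (i, j) \<in> \<Omega> then prox_gc g c (D $ i $ j) else 0);
           H = maskO \<Omega> X - maskO \<Omega> S';
           U' = sasd_U \<Omega> H U V;
           V' = sasd_V \<Omega> H U' V
       in (U', V', S', c)))"

definition U_it where "U_it g \<xi> X \<Omega> U0 V0 k = fst (rmc_iter g \<xi> X \<Omega> U0 V0 k)"
definition V_it where "V_it g \<xi> X \<Omega> U0 V0 k = fst (snd (rmc_iter g \<xi> X \<Omega> U0 V0 k))"
definition S_it where "S_it g \<xi> X \<Omega> U0 V0 k = fst (snd (snd (rmc_iter g \<xi> X \<Omega> U0 V0 k)))"
text \<open>c^k (computed in step k, stored in state k+1).\<close>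
definition c_it where "c_it g \<xi> X \<Omega> U0 V0 k = snd (snd (snd (rmc_iter g \<xi> X \<Omega> U0 V0 (Suc k))))"
definition d_it where "d_it g \<xi> X \<Omega> U0 V0 k =
   d_scale \<Omega> (X - U_it g \<xi> X \<Omega> U0 V0 k ** V_it g \<xi> X \<Omega> U0 V0 k)"

end

theory Submission
  imports Defs
begin


locale goodg =
  fixes g gd :: "real \<Rightarrow> real"
  assumes gder: "\<And>s. s > 0 \<Longrightarrow> (g has_real_derivative gd s) (at s)"
    and gdpos: "\<And>s. s > 0 \<Longrightarrow> gd s > 0"
    and qneg: "\<And>c s. 0 < c \<Longrightarrow> 0 < s \<Longrightarrow> s \<le> c \<Longrightarrow> s - c / gd c * gd s \<le> 0"
    and qmono: "\<And>c s t. 0 < c \<Longrightarrow> c \<le> s \<Longrightarrow> s \<le> t \<Longrightarrow> s - c / gd c * gd s \<le> t - c / gd c * gd t"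
begin

definition psi where "psi c t = t^2/2 - l_gc g c t"
definition Q0 where "Q0 c s = (if s \<le> c then 0 else s - c / gd c * gd s)"
definition Q where "Q c t = sgn t * Q0 c \<bar>t\<bar>"

lemma a_eq: "c > 0 \<Longrightarrow> a_par g c = c / gd c"
  unfolding a_par_def using DERIV_imp_deriv[OF gder] by simp

lemma b_eq: "c > 0 \<Longrightarrow> b_par g c = c^2/2 - c / gd c * g c"
  unfolding b_par_def using a_eq by simp

lemma Q0_nonneg: "c > 0 \<Longrightarrow> Q0 c s \<ge> 0"
  unfolding Q0_def using qmono[of c c s] gdpos[of c] by auto

lemma Q0_mono: "c > 0 \<Longrightarrow> s \<le> t \<Longrightarrow> Q0 c s \<le> Q0 c t"
  unfolding Q0_def using qmono[of c _ t] qmono[of c c t] gdpos[of c] by auto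

lemma Q_mono: "c > 0 \<Longrightarrow> s \<le> t \<Longrightarrow> Q c s \<le> Q c t"
  unfolding Q_def using Q0_mono[of c "\<bar>s\<bar>" "\<bar>t\<bar>"] Q0_mono[of c "\<bar>t\<bar>" "\<bar>s\<bar>"]
    Q0_nonneg[of c "\<bar>s\<bar>"] Q0_nonneg[of c "\<bar>t\<bar>"]
  by (cases "s < 0"; cases "t < 0"; cases "s = 0"; cases "t = 0") (auto simp: sgn_if)

lemma prox_eq: "c > 0 \<Longrightarrow> prox_gc g c x = Q c x"
proof -
  assume c: "c > 0"
  show ?thesis
  proof (cases "x = 0")
    case True then show ?thesis by (simp add: prox_gc_def Q_def)
  next
    case False
    then have ax: "\<bar>x\<bar> > 0" by simp
    have d: "deriv g \<bar>x\<bar> = gd \<bar>x\<bar>" using DERIV_imp_deriv[OF gder[OF ax]] .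
    show ?thesis
    proof (cases "\<bar>x\<bar> \<le> c")
      case True
      then show ?thesis using False qneg[OF c ax]
        by (auto simp: prox_gc_def Q_def Q0_def d a_eq[OF c] mult.commute)
    next
      case nc: False
      then have "0 \<le> \<bar>x\<bar> - c / gd c * gd \<bar>x\<bar>"
        using qmono[OF c order_refl, of "\<bar>x\<bar>"] gdpos[OF c] by auto
      then show ?thesis using False nc
        by (auto simp: prox_gc_def Q_def Q0_def d a_eq[OF c] mult.commute)
    qed
  qed
qed

lemma psi_even: "psi c (-t) = psi c t"
  by (simp add: psi_def l_gc_def)


lemma psi_right: "c > 0 \<Longrightarrow> x \<ge> c \<Longrightarrow> psi c x = x^2/2 - (c / gd c * g x + (c^2/2 - c / gd c * g c))"
  by (cases "x = c") (auto simp: psi_def l_gc_def a_eq b_eq)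

lemma psi_mid: "\<bar>x\<bar> \<le> c \<Longrightarrow> psi c x = 0"
  by (simp add: psi_def l_gc_def)

lemma r_deriv: "c > 0 \<Longrightarrow> t > 0 \<Longrightarrow>
  ((\<lambda>x. x^2/2 - (c / gd c * g x + (c^2/2 - c / gd c * g c))) has_real_derivative (t - c / gd c * gd t)) (at t)"
  using gdpos[of c] by (auto intro!: derivative_eq_intros gder)

lemma psi_deriv_pos: assumes c: "c > 0" and t: "t \<ge> c" shows "(psi c has_real_derivative Q c t) (at t)"
proof (cases "t = c")
  case False
  then have tc: "t > c" using t by simp
  have "(psi c has_real_derivative (t - c / gd c * gd t)) (at t)"
    apply (rule has_field_derivative_transform_within_open[OF r_deriv[OF c], where S="{c<..}"])
    using tc c psi_right[OF c] by auto
  then show ?thesis using tc c by (simp add: Q_def Q0_def)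
next
  case True
  let ?r = "\<lambda>x. x^2/2 - (c / gd c * g x + (c^2/2 - c / gd c * g c))"
  have Qc: "Q c c = 0" using c by (simp add: Q_def Q0_def)
  have rd: "(?r has_real_derivative 0) (at c)" using r_deriv[OF c c] gdpos[OF c] by simp
  have "((\<lambda>y. (?r y - ?r c) / (y - c)) \<longlongrightarrow> 0) (at c)"
    using rd by (simp add: has_field_derivative_iff)
  then have R: "((\<lambda>y. (?r y - ?r c) / (y - c)) \<longlongrightarrow> 0) (at_right c)"
    by (rule filterlim_mono) (simp_all add: at_le)
  have "((\<lambda>y. (psi c y - psi c c) / (y - c)) \<longlongrightarrow> 0) (at_right c)"
  proof (rule Lim_transform_eventually[OF R])
    show "\<forall>\<^sub>F x in at_right c. (?r x - ?r c) / (x - c) = (psi c x - psi c c) / (x - c)"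
      using eventually_at_right_less[of c] by eventually_elim (use psi_right[OF c] in auto)
  qed
  moreover have "((\<lambda>y. (psi c y - psi c c) / (y - c)) \<longlongrightarrow> 0) (at_left c)"
  proof (rule Lim_transform_eventually[OF tendsto_const])
    have "\<forall>\<^sub>F x in at_left c. -c < x" using c order_tendstoD(1)[OF tendsto_ident_at, of "-c" c "{..<c}"] by auto
    moreover have "\<forall>\<^sub>F x in at_left c. x < c" by (simp add: eventually_at_filter)
    ultimately show "\<forall>\<^sub>F x in at_left c. (0::real) = (psi c x - psi c c) / (x - c)"
      by eventually_elim (use c in \<open>auto simp: psi_mid\<close>)
  qed
  ultimately have "((\<lambda>y. (psi c y - psi c c) / (y - c)) \<longlongrightarrow> 0) (at c)"
    by (simp add: filterlim_split_at)
  then show ?thesis using True Qc by (simp add: has_field_derivative_iff)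
qed

lemma Q_odd: "Q c (-t) = - Q c t" by (simp add: Q_def)

lemma psi_deriv: assumes c: "c > 0" shows "(psi c has_real_derivative Q c t) (at t)"
proof -
  consider "t \<ge> c" | "t \<le> -c" | "\<bar>t\<bar> < c" by linarith
  then show ?thesis
  proof cases
    case 1 then show ?thesis using psi_deriv_pos[OF c] by simp
  next
    case 2
    have d: "(psi c has_real_derivative Q c (-t)) (at (-t))" using psi_deriv_pos[OF c] 2 by simp
    have "((\<lambda>x. psi c (-x)) has_real_derivative Q c (-t) * (-1)) (at t)"
      by (rule DERIV_chain2[where g=uminus, OF d]) (auto intro!: derivative_eq_intros)
    then show ?thesis by (simp add: psi_even Q_odd)
  next
    case 3
    have "((\<lambda>x. 0::real) has_real_derivative 0) (at t)" by simp
    then have "(psi c has_real_derivative 0) (at t)"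
      by (rule has_field_derivative_transform_within_open[where S="{-c<..<c}"]) (use 3 in \<open>auto simp: psi_mid\<close>)
    moreover have "Q c t = 0" using 3 by (simp add: Q_def Q0_def)
    ultimately show ?thesis by simp
  qed
qed

lemma tangent: assumes c: "c > 0" shows "psi c t \<ge> psi c x + Q c x * (t - x)"
proof -
  consider "x < t" | "t < x" | "t = x" by linarith
  then show ?thesis
  proof cases
    case 1
    obtain z where z: "x < z" "z < t" "psi c t - psi c x = (t - x) * Q c z"
      using MVT2[OF 1 psi_deriv[OF c]] by blast
    have "Q c x \<le> Q c z" using Q_mono[OF c] z by simp
    then have "(t - x) * Q c x \<le> (t - x) * Q c z" using 1 by (intro mult_left_mono) auto
    then show ?thesis using z by (simp add: algebra_simps)
  next
    case 2
    obtain z where z: "t < z" "z < x" "psi c x - psi c t = (x - t) * Q c z"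
      using MVT2[OF 2 psi_deriv[OF c]] by blast
    have "Q c z \<le> Q c x" using Q_mono[OF c] z by simp
    then have "(x - t) * Q c z \<le> (x - t) * Q c x" using 2 by (intro mult_left_mono) auto
    then show ?thesis using z by (simp add: algebra_simps)
  qed simp
qed

lemma key: assumes c: "c > 0"
  shows "l_gc g c t - (t - prox_gc g c x)^2/2 \<le> l_gc g c x - (x - prox_gc g c x)^2/2"
proof -
  have "psi c t - t * Q c x \<ge> psi c x - x * Q c x" using tangent[OF c, where t=t and x=x] by (simp add: algebra_simps)
  then show ?thesis unfolding prox_eq[OF c] psi_def by (simp add: power2_eq_square field_simps)
qed

lemma g_mono: "0 < s \<Longrightarrow> s \<le> t \<Longrightarrow> g s \<le> g t"
proof (rule DERIV_nonneg_imp_nondecreasing[of s t g])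
  fix x assume "0 < s" "s \<le> x"
  then have "x > 0" by simp
  then show "\<exists>y. (g has_real_derivative y) (at x) \<and> 0 \<le> y"
    using gder gdpos less_imp_le by blast
qed

lemma l_nonneg: assumes c: "c > 0" shows "l_gc g c t \<ge> 0"
proof (cases "\<bar>t\<bar> \<le> c")
  case False
  have "g c \<le> g \<bar>t\<bar>" using g_mono[OF c] False by simp
  then have "c / gd c * g c \<le> c / gd c * g \<bar>t\<bar>" using c gdpos[OF c] by (intro mult_left_mono) auto
  moreover have "0 \<le> c^2/2" by simp
  ultimately have "0 \<le> c / gd c * g \<bar>t\<bar> + (c^2/2 - c / gd c * g c)" by linarith
  then show ?thesis using False unfolding l_gc_def a_eq[OF c] b_eq[OF c] by simp
qed (simp add: l_gc_def)

lemma a_le: assumes c': "0 < c'" and cc: "c' \<le> c" shows "c' / gd c' \<le> c / gd c"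
proof -
  have "c' - c' / gd c' * gd c' \<le> c - c' / gd c' * gd c" using qmono[OF c' order_refl cc] .
  then have "c' / gd c' * gd c \<le> c" using gdpos[OF c'] by simp
  then show ?thesis using gdpos[of c] c' cc by (simp add: field_simps)
qed

lemma Q0_le: assumes c': "0 < c'" and cc: "c' \<le> c" and s: "s \<ge> 0" shows "Q0 c s \<le> Q0 c' s"
proof -
  have "c' / gd c' * gd s \<le> c / gd c * gd s" if "s > 0"
    using a_le[OF c' cc] gdpos[OF that] by (intro mult_right_mono) auto
  then show ?thesis using Q0_nonneg[OF c', of s] cc c' unfolding Q0_def by (auto simp: not_le)
qed

lemma l_le: assumes c': "0 < c'" and cc: "c' \<le> c" shows "l_gc g c' t \<le> l_gc g c t"
proof -
  have c: "c > 0" using c' cc by simp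
  have "(\<lambda>x. psi c' x - psi c x) 0 \<le> (\<lambda>x. psi c' x - psi c x) \<bar>t\<bar>"
  proof (rule DERIV_nonneg_imp_nondecreasing[of 0 "\<bar>t\<bar>" "\<lambda>x. psi c' x - psi c x"])
    fix x assume "0 \<le> x" "x \<le> \<bar>t\<bar>"
    then show "\<exists>y. ((\<lambda>x. psi c' x - psi c x) has_real_derivative y) (at x) \<and> 0 \<le> y"
      using Q0_le[OF c' cc, of x] psi_deriv[OF c', of x] psi_deriv[OF c, of x]
      by (intro exI[of _ "Q c' x - Q c x"]) (auto intro!: derivative_eq_intros simp: Q_def sgn_if)
  qed simp
  moreover have "psi c' 0 = 0" "psi c 0 = 0" by (simp_all add: psi_mid c c' less_imp_le)
  moreover have "psi c' \<bar>t\<bar> = psi c' t" "psi c \<bar>t\<bar> = psi c t"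
    by (cases "t \<ge> 0"; simp add: psi_even)+
  ultimately show ?thesis by (simp add: psi_def)
qed

lemma phi_bound: assumes c': "0 < c'" and cc: "c' \<le> c" and y: "y = prox_gc g c x"
  shows "phi_gc g c' y \<le> l_gc g c x - (x - y)^2/2"
    and "bdd_above (range (\<lambda>t. l_gc g c' t - (t - y)^2/2))"
    and "l_gc g c' t - (t - y)^2/2 \<le> phi_gc g c' y"
proof -
  have c: "c > 0" using c' cc by simp
  have B: "l_gc g c' t - (t - y)^2/2 \<le> l_gc g c x - (x - y)^2/2" for t
    using l_le[OF c' cc, of t] key[OF c, of t x] y by simp
  then show "phi_gc g c' y \<le> l_gc g c x - (x - y)^2/2"
    unfolding phi_gc_def by (intro cSUP_least) auto
  show bd: "bdd_above (range (\<lambda>t. l_gc g c' t - (t - y)^2/2))"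
    using B by (intro bdd_aboveI2) auto
  show "l_gc g c' t - (t - y)^2/2 \<le> phi_gc g c' y"
    unfolding phi_gc_def by (rule cSUP_upper[OF _ bd]) simp
qed

end



lemma goodg_from:
  fixes h :: "real \<Rightarrow> real"
  assumes d: "\<And>s. s > 0 \<Longrightarrow> (g has_real_derivative s * h s) (at s)"
    and hpos: "\<And>s. s > 0 \<Longrightarrow> h s > 0"
    and hmono: "\<And>s t. 0 < s \<Longrightarrow> s \<le> t \<Longrightarrow> h t \<le> h s"
  shows "goodg g (\<lambda>s. s * h s)"
proof
  show "(g has_real_derivative s * h s) (at s)" if "s > 0" for s using d that .
  show "s * h s > 0" if "s > 0" for s using hpos that by simp
  have e: "c / (c * h c) * (s * h s) = s * (h s / h c)" if "c > 0" for c s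
    using hpos[OF that] that by (simp add: field_simps)
  show "s - c / (c * h c) * (s * h s) \<le> 0" if "0 < c" "0 < s" "s \<le> c" for c s
  proof -
    have "h c \<le> h s" using hmono that by simp
    then have "1 \<le> h s / h c" using hpos[of c] that by simp
    then have "s * 1 \<le> s * (h s / h c)" using that by (intro mult_left_mono) auto
    then show ?thesis using e[OF that(1)] by simp
  qed
  show "s - c / (c * h c) * (s * h s) \<le> t - c / (c * h c) * (t * h t)"
    if "0 < c" "c \<le> s" "s \<le> t" for c s t
  proof -
    have "h s \<le> h c" "h t \<le> h s" using hmono that by auto
    then have 1: "0 \<le> 1 - h s / h c" "1 - h s / h c \<le> 1 - h t / h c"
      using hpos[of c] that by (auto simp: divide_right_mono)
    have "s * (1 - h s / h c) \<le> t * (1 - h t / h c)"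
      using 1 that by (intro mult_mono) auto
    then show ?thesis using e[OF that(1), of s] e[OF that(1), of t] by (simp add: algebra_simps)
  qed
qed

lemma goodg_how: assumes "\<sigma> > 0" shows "goodg (g_how \<sigma>) (\<lambda>s. s * exp (-(s^2)/\<sigma>^2))"
proof (rule goodg_from)
  fix s :: real assume "s > 0"
  show "(g_how \<sigma> has_real_derivative s * exp (-(s^2)/\<sigma>^2)) (at s)"
    unfolding g_how_def[abs_def] using assms
    by (auto intro!: derivative_eq_intros simp: field_simps power2_eq_square)
next
  fix s t :: real assume "0 < s" "s \<le> t"
  then show "exp (-(t^2)/\<sigma>^2) \<le> exp (-(s^2)/\<sigma>^2)"
    using assms by (auto simp: divide_right_mono power_mono)
qed simp

lemma goodg_hoc: assumes "\<gamma> > 0" shows "goodg (g_hoc \<gamma>) (\<lambda>s. s * (1 / (1 + s^2/\<gamma>^2)))"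
proof (rule goodg_from)
  fix s :: real assume "s > 0"
  have "1 + s^2/\<gamma>^2 > 0" by (simp add: add_pos_nonneg)
  then show "(g_hoc \<gamma> has_real_derivative s * (1 / (1 + s^2/\<gamma>^2))) (at s)"
    unfolding g_hoc_def[abs_def] using assms
    by (auto intro!: derivative_eq_intros simp: field_simps power2_eq_square)
next
  fix s :: real assume "s > 0"
  show "1 / (1 + s^2/\<gamma>^2) > 0" by (simp add: add_pos_nonneg)
next
  fix s t :: real assume "0 < s" "s \<le> t"
  then show "1 / (1 + t^2/\<gamma>^2) \<le> 1 / (1 + s^2/\<gamma>^2)"
    using assms by (auto intro!: divide_left_mono divide_right_mono power_mono add_pos_nonneg mult_pos_pos)
qed

lemma goodg_hop: assumes "0 < p" "p \<le> 1" shows "goodg (g_hop p) (\<lambda>s. s * (p * s powr (p - 2)))"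
proof (rule goodg_from)
  fix s :: real assume s: "s > 0"
  have "((\<lambda>x. x powr p) has_real_derivative p * s powr (p - 1)) (at s)"
    using s by (auto intro!: derivative_eq_intros)
  then have "(g_hop p has_real_derivative p * s powr (p - 1)) (at s)"
    by (rule has_field_derivative_transform_within_open[where S="{0<..}"]) (use s in \<open>auto simp: g_hop_def\<close>)
  moreover have "p * s powr (p - 1) = s * (p * s powr (p - 2))"
    using s by (simp add: powr_diff field_simps powr_numeral power2_eq_square)
  ultimately show "(g_hop p has_real_derivative s * (p * s powr (p - 2))) (at s)" by simp
next
  fix s :: real assume "s > 0"
  then show "p * s powr (p - 2) > 0" using assms by simp
next
  fix s t :: real assume "0 < s" "s \<le> t"
  then show "p * t powr (p - 2) \<le> p * s powr (p - 2)"
    using assms by (intro mult_left_mono powr_mono2') auto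
qed




lemma maskO_diff: "maskO \<Omega> (A - B) = maskO \<Omega> A - maskO \<Omega> B"
  by (simp add: maskO_def vec_eq_iff)
lemma maskO_scaleR: "maskO \<Omega> (r *\<^sub>R A) = r *\<^sub>R maskO \<Omega> A"
  by (simp add: maskO_def vec_eq_iff)
lemma maskO_idem: "maskO \<Omega> (maskO \<Omega> A) = maskO \<Omega> A"
  by (simp add: maskO_def vec_eq_iff)

lemma inner_mask: "maskO \<Omega> A \<bullet> B = maskO \<Omega> A \<bullet> maskO \<Omega> B"
  unfolding inner_vec_def maskO_def by (auto intro!: sum.cong)

lemma trace1: fixes A :: "real^'n::finite^'m::finite" and V :: "real^'n^'r::finite" and T :: "real^'r^'m"
  shows "(A ** transpose V) \<bullet> T = A \<bullet> (T ** V)"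
proof -
  have "(A ** transpose V) \<bullet> T = (\<Sum>i\<in>UNIV. \<Sum>r\<in>UNIV. \<Sum>j\<in>UNIV. A$i$j * V$r$j * T$i$r)"
    unfolding inner_vec_def matrix_matrix_mult_def transpose_def
    by (simp add: sum_distrib_right)
  also have "\<dots> = (\<Sum>i\<in>UNIV. \<Sum>j\<in>UNIV. \<Sum>r\<in>UNIV. A$i$j * V$r$j * T$i$r)"
    by (rule sum.cong[OF refl], rule sum.swap)
  also have "\<dots> = A \<bullet> (T ** V)"
    unfolding inner_vec_def matrix_matrix_mult_def
    by (simp add: sum_distrib_left mult_ac)
  finally show ?thesis .
qed

lemma trace2: fixes A :: "real^'n::finite^'m::finite" and U :: "real^'r::finite^'m" and T :: "real^'n^'r"
  shows "(transpose U ** A) \<bullet> T = A \<bullet> (U ** T)"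
proof -
  have "(transpose U ** A) \<bullet> T = (\<Sum>r\<in>UNIV. \<Sum>j\<in>UNIV. \<Sum>i\<in>UNIV. U$i$r * A$i$j * T$r$j)"
    unfolding inner_vec_def matrix_matrix_mult_def transpose_def
    by (simp add: sum_distrib_right)
  also have "\<dots> = (\<Sum>j\<in>UNIV. \<Sum>r\<in>UNIV. \<Sum>i\<in>UNIV. U$i$r * A$i$j * T$r$j)"
    by (rule sum.swap)
  also have "\<dots> = (\<Sum>j\<in>UNIV. \<Sum>i\<in>UNIV. \<Sum>r\<in>UNIV. U$i$r * A$i$j * T$r$j)"
    by (rule sum.cong[OF refl], rule sum.swap)
  also have "\<dots> = (\<Sum>i\<in>UNIV. \<Sum>j\<in>UNIV. \<Sum>r\<in>UNIV. U$i$r * A$i$j * T$r$j)"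
    by (rule sum.swap)
  also have "\<dots> = A \<bullet> (U ** T)"
    unfolding inner_vec_def matrix_matrix_mult_def
    by (simp add: sum_distrib_left mult_ac)
  finally show ?thesis .
qed

lemma linesearch: fixes A B :: "'a::real_inner"
  shows "norm (A + (- (A \<bullet> B) / (norm B)^2) *\<^sub>R B) \<le> norm A"
proof (cases "B = 0")
  case True then show ?thesis by simp
next
  case False
  let ?m = "- (A \<bullet> B) / (norm B)^2"
  have nb: "(norm B)^2 > 0" using False by simp
  have "(norm (A + ?m *\<^sub>R B))^2 = (A + ?m *\<^sub>R B) \<bullet> (A + ?m *\<^sub>R B)"
    by (rule power2_norm_eq_inner)
  also have "\<dots> = A \<bullet> A + 2 * ?m * (A \<bullet> B) + ?m^2 * (B \<bullet> B)"
    unfolding inner_add_left inner_add_right inner_scaleR_left inner_scaleR_right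
    by (simp only: inner_commute[of B A]) (simp add: algebra_simps power2_eq_square)
  also have "\<dots> = (norm A)^2 + 2 * ?m * (A \<bullet> B) + ?m^2 * (norm B)^2"
    by (simp only: power2_norm_eq_inner)
  also have "\<dots> = (norm A)^2 - (A \<bullet> B)^2 / (norm B)^2"
    using nb by (simp add: field_simps power2_eq_square)
  also have "\<dots> \<le> (norm A)^2" using nb by simp
  finally show ?thesis using power2_le_imp_le by fastforce
qed

lemma mm_diff_scale: fixes U T :: "real^'r::finite^'m::finite" and V :: "real^'n::finite^'r"
  shows "(U - \<mu> *\<^sub>R T) ** V = U ** V - \<mu> *\<^sub>R (T ** V)"
  by (simp add: matrix_matrix_mult_def vec_eq_iff sum_subtractf sum_distrib_left algebra_simps)

lemma mm_diff_scale2: fixes U :: "real^'r::finite^'m::finite" and V T :: "real^'n::finite^'r"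
  shows "U ** (V - \<mu> *\<^sub>R T) = U ** V - \<mu> *\<^sub>R (U ** T)"
  by (simp add: matrix_matrix_mult_def vec_eq_iff sum_subtractf sum_distrib_left algebra_simps)

lemma sasdU_dec:
  fixes H :: "real^'n::finite^'m::finite" and U :: "real^'r::finite^'m" and V :: "real^'n^'r"
  shows "norm (maskO \<Omega> H - maskO \<Omega> (sasd_U \<Omega> H U V ** V)) \<le> norm (maskO \<Omega> H - maskO \<Omega> (U ** V))"
proof -
  define A where "A = maskO \<Omega> H - maskO \<Omega> (U ** V)"
  define G where "G = - (A ** transpose V)"
  define T where "T = G ** matrix_inv (V ** transpose V)"
  define B where "B = maskO \<Omega> (T ** V)"
  have Am: "maskO \<Omega> A = A" by (simp add: A_def maskO_diff maskO_idem)
  have GT: "G \<bullet> T = - (A \<bullet> B)"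
    unfolding G_def B_def using trace1[of A V T] inner_mask[of \<Omega> A "T ** V"] Am
    by (simp add: inner_minus_left)
  have U': "sasd_U \<Omega> H U V = U - (- (A \<bullet> B) / (norm B)^2) *\<^sub>R T"
    unfolding sasd_U_def Let_def A_def[symmetric] G_def[symmetric] T_def[symmetric] B_def[symmetric] GT ..
  have e: "maskO \<Omega> H - maskO \<Omega> (sasd_U \<Omega> H U V ** V) = A + (- (A \<bullet> B) / (norm B)^2) *\<^sub>R B"
    unfolding U' mm_diff_scale maskO_diff maskO_scaleR A_def B_def by simp
  have "norm (maskO \<Omega> H - maskO \<Omega> (sasd_U \<Omega> H U V ** V)) \<le> norm A"
    using linesearch[of A B] by (simp only: e)
  then show ?thesis unfolding A_def .
qed

lemma sasdV_dec:
  fixes H :: "real^'n::finite^'m::finite" and U :: "real^'r::finite^'m" and V :: "real^'n^'r"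
  shows "norm (maskO \<Omega> H - maskO \<Omega> (U ** sasd_V \<Omega> H U V)) \<le> norm (maskO \<Omega> H - maskO \<Omega> (U ** V))"
proof -
  define A where "A = maskO \<Omega> H - maskO \<Omega> (U ** V)"
  define G where "G = - (transpose U ** A)"
  define T where "T = matrix_inv (transpose U ** U) ** G"
  define B where "B = maskO \<Omega> (U ** T)"
  have Am: "maskO \<Omega> A = A" by (simp add: A_def maskO_diff maskO_idem)
  have GT: "G \<bullet> T = - (A \<bullet> B)"
    unfolding G_def B_def using trace2[of U A T] inner_mask[of \<Omega> A "U ** T"] Am
    by (simp add: inner_minus_left)
  have V': "sasd_V \<Omega> H U V = V - (- (A \<bullet> B) / (norm B)^2) *\<^sub>R T"
    unfolding sasd_V_def Let_def A_def[symmetric] G_def[symmetric] T_def[symmetric] B_def[symmetric] GT ..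
  have e: "maskO \<Omega> H - maskO \<Omega> (U ** sasd_V \<Omega> H U V) = A + (- (A \<bullet> B) / (norm B)^2) *\<^sub>R B"
    unfolding V' mm_diff_scale2 maskO_diff maskO_scaleR A_def B_def by simp
  have "norm (maskO \<Omega> H - maskO \<Omega> (U ** sasd_V \<Omega> H U V)) \<le> norm A"
    using linesearch[of A B] by (simp only: e)
  then show ?thesis unfolding A_def .
qed

lemma loss_entry: fixes X :: "real^'n::finite^'m::finite"
  shows "loss_L g c X \<Omega> U V S =
    (\<Sum>(i,j)\<in>\<Omega>. ((X - U ** V)$i$j - S$i$j)^2/2 + phi_gc g c (S$i$j))"
proof -
  let ?M = "maskO \<Omega> X - maskO \<Omega> (U ** V) - maskO \<Omega> S"
  have "(norm ?M)^2 = (\<Sum>i\<in>UNIV. \<Sum>j\<in>UNIV. (?M$i$j)^2)"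
    unfolding power2_norm_eq_inner inner_vec_def inner_real_def by (simp add: power2_eq_square)
  also have "\<dots> = (\<Sum>p\<in>UNIV. (?M $ fst p $ snd p)^2)"
    by (simp add: sum.cartesian_product UNIV_Times_UNIV[symmetric] case_prod_beta del: UNIV_Times_UNIV)
  also have "\<dots> = (\<Sum>p\<in>UNIV. if p \<in> \<Omega> then ((X - U ** V) $ fst p $ snd p - S $ fst p $ snd p)^2 else 0)"
    by (rule sum.cong) (auto simp: maskO_def)
  also have "\<dots> = (\<Sum>p\<in>\<Omega>. ((X - U ** V) $ fst p $ snd p - S $ fst p $ snd p)^2)"
    by (simp add: sum.If_cases Int_absorb1)
  finally have "(norm ?M)^2/2 = (\<Sum>(i,j)\<in>\<Omega>. ((X - U ** V)$i$j - S$i$j)^2/2)"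
    by (simp add: sum_divide_distrib case_prod_beta)
  then show ?thesis unfolding loss_L_def by (simp add: sum.distrib case_prod_beta)
qed

lemma loss_H: "loss_L g c X \<Omega> U V S =
   (norm ((maskO \<Omega> X - maskO \<Omega> S) - maskO \<Omega> (U ** V)))^2 / 2 + (\<Sum>(i, j)\<in>\<Omega>. phi_gc g c (S $ i $ j))"
  unfolding loss_L_def by (simp add: algebra_simps)




lemma it_step:
  fixes X :: "real^'n::finite^'m::finite" and U0 :: "real^'r::finite^'m" and V0 :: "real^'n^'r"
    and g \<xi> \<Omega> and k :: nat
  defines "Sx \<equiv> S_it g \<xi> X \<Omega> U0 V0 (Suc k)"
  defines "H \<equiv> maskO \<Omega> X - maskO \<Omega> Sx"
  shows "Sx = (\<chi> i j. if (i, j) \<in> \<Omega> then prox_gc g (c_it g \<xi> X \<Omega> U0 V0 k)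
                 ((X - U_it g \<xi> X \<Omega> U0 V0 k ** V_it g \<xi> X \<Omega> U0 V0 k) $ i $ j) else 0)"
    and "U_it g \<xi> X \<Omega> U0 V0 (Suc k) = sasd_U \<Omega> H (U_it g \<xi> X \<Omega> U0 V0 k) (V_it g \<xi> X \<Omega> U0 V0 k)"
    and "V_it g \<xi> X \<Omega> U0 V0 (Suc k) = sasd_V \<Omega> H (U_it g \<xi> X \<Omega> U0 V0 (Suc k)) (V_it g \<xi> X \<Omega> U0 V0 k)"
    and "c_it g \<xi> X \<Omega> U0 V0 k = (if k = 0 then \<xi> * d_it g \<xi> X \<Omega> U0 V0 k
            else min (\<xi> * d_it g \<xi> X \<Omega> U0 V0 k) (c_it g \<xi> X \<Omega> U0 V0 (k - 1)))"
proof -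
  obtain U V S cp where e: "rmc_iter g \<xi> X \<Omega> U0 V0 k = (U, V, S, cp)" by (cases "rmc_iter g \<xi> X \<Omega> U0 V0 k") auto
  have cp: "k > 0 \<Longrightarrow> c_it g \<xi> X \<Omega> U0 V0 (k - 1) = cp"
    using e by (cases k) (simp_all add: c_it_def del: rmc_iter.simps)
  have UV: "U_it g \<xi> X \<Omega> U0 V0 k = U" "V_it g \<xi> X \<Omega> U0 V0 k = V" using e by (simp_all add: U_it_def V_it_def)
  have ck: "c_it g \<xi> X \<Omega> U0 V0 k = (if k = 0 then \<xi> * d_scale \<Omega> (X - U ** V) else min (\<xi> * d_scale \<Omega> (X - U ** V)) cp)"
    using e by (simp add: c_it_def Let_def)
  show "Sx = (\<chi> i j. if (i, j) \<in> \<Omega> then prox_gc g (c_it g \<xi> X \<Omega> U0 V0 k)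
                 ((X - U_it g \<xi> X \<Omega> U0 V0 k ** V_it g \<xi> X \<Omega> U0 V0 k) $ i $ j) else 0)"
    unfolding UV ck using e by (simp add: Sx_def S_it_def Let_def)
  show "U_it g \<xi> X \<Omega> U0 V0 (Suc k) = sasd_U \<Omega> H (U_it g \<xi> X \<Omega> U0 V0 k) (V_it g \<xi> X \<Omega> U0 V0 k)"
    using e by (simp add: H_def Sx_def S_it_def U_it_def V_it_def Let_def)
  show "V_it g \<xi> X \<Omega> U0 V0 (Suc k) = sasd_V \<Omega> H (U_it g \<xi> X \<Omega> U0 V0 (Suc k)) (V_it g \<xi> X \<Omega> U0 V0 k)"
    using e by (simp add: H_def Sx_def S_it_def U_it_def V_it_def Let_def)
  show "c_it g \<xi> X \<Omega> U0 V0 k = (if k = 0 then \<xi> * d_it g \<xi> X \<Omega> U0 V0 k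
            else min (\<xi> * d_it g \<xi> X \<Omega> U0 V0 k) (c_it g \<xi> X \<Omega> U0 V0 (k - 1)))"
    unfolding ck d_it_def UV using cp by simp
qed




context goodg begin

lemma loss_prox_step:
  fixes X :: "real^'n::finite^'m::finite" and U :: "real^'r::finite^'m"
  assumes c1: "0 < c1" and cc: "c1 \<le> c0"
    and S': "\<And>i j. (i, j) \<in> \<Omega> \<Longrightarrow> S' $ i $ j = prox_gc g c1 ((X - U ** V) $ i $ j)"
    and S: "\<And>i j. (i, j) \<in> \<Omega> \<Longrightarrow> S $ i $ j = prox_gc g c0 (x i j)"
  shows "loss_L g c1 X \<Omega> U V S' \<le> loss_L g c1 X \<Omega> U V S"
  unfolding loss_entry
proof (rule sum_mono, clarify)
  fix i j assume p: "(i, j) \<in> \<Omega>"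
  let ?D = "(X - U ** V) $ i $ j"
  have 1: "phi_gc g c1 (S' $ i $ j) \<le> l_gc g c1 ?D - (?D - S' $ i $ j)^2/2"
    using phi_bound(1)[OF c1 order_refl S'[OF p]] .
  have 2: "l_gc g c1 ?D - (?D - S $ i $ j)^2/2 \<le> phi_gc g c1 (S $ i $ j)"
    using phi_bound(3)[OF c1 cc S[OF p]] .
  show "(?D - S' $ i $ j)\<^sup>2 / 2 + phi_gc g c1 (S' $ i $ j) \<le> (?D - S $ i $ j)\<^sup>2 / 2 + phi_gc g c1 (S $ i $ j)"
    using 1 2 by linarith
qed

lemma loss_c_step:
  fixes X :: "real^'n::finite^'m::finite" and U :: "real^'r::finite^'m"
  assumes c2: "0 < c2" and cc: "c2 \<le> c1"
    and S: "\<And>i j. (i, j) \<in> \<Omega> \<Longrightarrow> S $ i $ j = prox_gc g c1 (x i j)"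
  shows "loss_L g c2 X \<Omega> U V S \<le> loss_L g c1 X \<Omega> U V S"
  unfolding loss_entry
proof (rule sum_mono, clarify)
  fix i j assume p: "(i, j) \<in> \<Omega>"
  have c1: "0 < c1" using c2 cc by simp
  have 1: "phi_gc g c2 (S $ i $ j) \<le> l_gc g c1 (x i j) - (x i j - S $ i $ j)^2/2"
    using phi_bound(1)[OF c2 cc S[OF p]] .
  have 2: "l_gc g c1 (x i j) - (x i j - S $ i $ j)^2/2 \<le> phi_gc g c1 (S $ i $ j)"
    using phi_bound(3)[OF c1 order_refl S[OF p]] .
  show "((X - U ** V) $ i $ j - S $ i $ j)\<^sup>2 / 2 + phi_gc g c2 (S $ i $ j) \<le> ((X - U ** V) $ i $ j - S $ i $ j)\<^sup>2 / 2 + phi_gc g c1 (S $ i $ j)"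
    using 1 2 by linarith
qed

lemma loss_nonneg:
  fixes X :: "real^'n::finite^'m::finite" and U :: "real^'r::finite^'m"
  assumes c1: "0 < c1" and cc: "c1 \<le> c0"
    and S: "\<And>i j. (i, j) \<in> \<Omega> \<Longrightarrow> S $ i $ j = prox_gc g c0 (x i j)"
  shows "0 \<le> loss_L g c1 X \<Omega> U V S"
  unfolding loss_entry
proof (rule sum_nonneg, clarify)
  fix i j assume p: "(i, j) \<in> \<Omega>"
  have "l_gc g c1 (S $ i $ j) - (S $ i $ j - S $ i $ j)^2/2 \<le> phi_gc g c1 (S $ i $ j)"
    using phi_bound(3)[OF c1 cc S[OF p]] .
  then have "0 \<le> phi_gc g c1 (S $ i $ j)" using l_nonneg[OF c1, of "S $ i $ j"] by simp
  then show "0 \<le> ((X - U ** V) $ i $ j - S $ i $ j)\<^sup>2 / 2 + phi_gc g c1 (S $ i $ j)" by simp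
qed

lemma sasd_step:
  fixes X :: "real^'n::finite^'m::finite" and U :: "real^'r::finite^'m"
  assumes H: "H = maskO \<Omega> X - maskO \<Omega> S"
  shows "loss_L g c X \<Omega> (sasd_U \<Omega> H U V) (sasd_V \<Omega> H (sasd_U \<Omega> H U V) V) S \<le> loss_L g c X \<Omega> U V S"
proof -
  have Hm: "maskO \<Omega> H = H" using H by (simp add: maskO_diff maskO_idem)
  let ?U = "sasd_U \<Omega> H U V"
  have "norm (maskO \<Omega> H - maskO \<Omega> (?U ** sasd_V \<Omega> H ?U V)) \<le> norm (maskO \<Omega> H - maskO \<Omega> (?U ** V))"
    by (rule sasdV_dec)
  also have "\<dots> \<le> norm (maskO \<Omega> H - maskO \<Omega> (U ** V))" by (rule sasdU_dec)
  finally have "norm (H - maskO \<Omega> (?U ** sasd_V \<Omega> H ?U V)) \<le> norm (H - maskO \<Omega> (U ** V))"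
    unfolding Hm .
  then have "(norm (H - maskO \<Omega> (?U ** sasd_V \<Omega> H ?U V)))^2 \<le> (norm (H - maskO \<Omega> (U ** V)))^2"
    by (intro power_mono) auto
  then show ?thesis unfolding loss_H H[symmetric] by simp
qed

end




context goodg begin

lemma main_conv:
  fixes X :: "real^'n::finite^'m::finite" and \<Omega> :: "('m \<times> 'n) set"
    and U0 :: "real^'r::finite^'m" and V0 :: "real^'n^'r" and \<xi> :: real
  assumes xi_pos: "\<xi> > 0"
    and d_pos: "\<And>k. d_it g \<xi> X \<Omega> U0 V0 k > 0"
  shows "convergent (\<lambda>k. loss_L g (c_it g \<xi> X \<Omega> U0 V0 (Suc k)) X \<Omega>
            (U_it g \<xi> X \<Omega> U0 V0 (Suc k)) (V_it g \<xi> X \<Omega> U0 V0 (Suc k)) (S_it g \<xi> X \<Omega> U0 V0 (Suc k)))"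
proof -
  let ?U = "U_it g \<xi> X \<Omega> U0 V0" and ?V = "V_it g \<xi> X \<Omega> U0 V0" and ?S = "S_it g \<xi> X \<Omega> U0 V0"
    and ?c = "c_it g \<xi> X \<Omega> U0 V0"
  define L where "L k = loss_L g (?c (Suc k)) X \<Omega> (?U (Suc k)) (?V (Suc k)) (?S (Suc k))" for k
  have cpos: "?c k > 0" for k
  proof (induction k)
    case 0 then show ?case using it_step(4)[of g \<xi> X \<Omega> U0 V0 0] xi_pos d_pos[of 0] by simp
  next
    case (Suc k) then show ?case using it_step(4)[of g \<xi> X \<Omega> U0 V0 "Suc k"] xi_pos d_pos[of "Suc k"] by simp
  qed
  have cdec: "?c (Suc k) \<le> ?c k" for k using it_step(4)[of g \<xi> X \<Omega> U0 V0 "Suc k"] by simp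
  have Sent: "\<And>i j. (i, j) \<in> \<Omega> \<Longrightarrow> ?S (Suc k) $ i $ j = prox_gc g (?c k) ((X - ?U k ** ?V k) $ i $ j)" for k
    using it_step(1)[of g \<xi> X \<Omega> U0 V0 k] by simp
  have dec: "L (Suc k) \<le> L k" for k
  proof -
    let ?H = "maskO \<Omega> X - maskO \<Omega> (?S (Suc (Suc k)))"
    have "L (Suc k) \<le> loss_L g (?c (Suc k)) X \<Omega> (?U (Suc (Suc k))) (?V (Suc (Suc k))) (?S (Suc (Suc k)))"
      unfolding L_def by (rule loss_c_step[OF cpos cdec Sent])
    also have "\<dots> = loss_L g (?c (Suc k)) X \<Omega> (sasd_U \<Omega> ?H (?U (Suc k)) (?V (Suc k)))
        (sasd_V \<Omega> ?H (sasd_U \<Omega> ?H (?U (Suc k)) (?V (Suc k))) (?V (Suc k))) (?S (Suc (Suc k)))"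
      using it_step(2,3)[of g \<xi> X \<Omega> U0 V0 "Suc k"] by simp
    also have "\<dots> \<le> loss_L g (?c (Suc k)) X \<Omega> (?U (Suc k)) (?V (Suc k)) (?S (Suc (Suc k)))"
      by (rule sasd_step) simp
    also have "\<dots> \<le> L k"
      unfolding L_def by (rule loss_prox_step[OF cpos cdec Sent Sent])
    finally show ?thesis .
  qed
  have lb: "\<forall>k. 0 \<le> L k"
    unfolding L_def using loss_nonneg[OF cpos cdec Sent] by blast
  obtain l where "L \<longlonglongrightarrow> l" using decseq_convergent[OF _ lb] dec by (metis decseq_SucI)
  then show ?thesis unfolding L_def convergent_def by blast
qed

end



theorem theorem1:
  fixes X :: "real^'n::finite^'m::finite"
    and \<Omega> :: "('m \<times> 'n) set"
    and U0 :: "real^'r::finite^'m"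
    and V0 :: "real^'n^'r"
    and g :: "real \<Rightarrow> real"
    and \<xi> :: real
  assumes loss: "(\<exists>\<sigma>>0. g = g_how \<sigma>) \<or> (\<exists>\<gamma>>0. g = g_hoc \<gamma>) \<or> (\<exists>p. 0 < p \<and> p \<le> 1 \<and> g = g_hop p)"
    and xi_pos: "\<xi> > 0"
    and d_pos: "\<And>k. d_it g \<xi> X \<Omega> U0 V0 k > 0"
    and invV: "\<And>k. invertible (V_it g \<xi> X \<Omega> U0 V0 k ** transpose (V_it g \<xi> X \<Omega> U0 V0 k))"
    and invU: "\<And>k. invertible (transpose (U_it g \<xi> X \<Omega> U0 V0 (Suc k)) ** U_it g \<xi> X \<Omega> U0 V0 (Suc k))"
  shows "convergent (\<lambda>k. loss_L g (c_it g \<xi> X \<Omega> U0 V0 (Suc k)) X \<Omega>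
            (U_it g \<xi> X \<Omega> U0 V0 (Suc k)) (V_it g \<xi> X \<Omega> U0 V0 (Suc k)) (S_it g \<xi> X \<Omega> U0 V0 (Suc k)))"
proof -
  have conv: "goodg g gd \<Longrightarrow> ?thesis" for gd
    by (rule goodg.main_conv[OF _ xi_pos d_pos])
  from loss show ?thesis
  proof (elim disjE exE conjE)
    fix \<sigma> :: real assume "\<sigma> > 0" "g = g_how \<sigma>"
    then show ?thesis using conv goodg_how by blast
  next
    fix \<gamma> :: real assume "\<gamma> > 0" "g = g_hoc \<gamma>"
    then show ?thesis using conv goodg_hoc by blast
  next
    fix p :: real assume "0 < p" "p \<le> 1" "g = g_hop p"
    then show ?thesis using conv goodg_hop by blast
  qed
qed

end
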